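(* Let $X$ be a finite set and let $\mu,\nu:X\to[0,\infty)$ with $\|\mu\|_1\le1$ and $\|\nu\|_1\le1$. Let $\eta,\delta>0$, let $J(x)=(x+|x|)/2$, and let $\epsilon=\delta/\bigl(2\rho(\eta^{-1},\delta/4,J)\bigr)$. Let $\|\cdot\|$ be a norm on $\mathbb{R}^X$ whose dual norm $\|\cdot\|^*$ is an algebra norm, and suppose $\|\mu-\nu\|\le\epsilon$. Then for every $f$ with $0\le f\le\mu$ there exists $g$ with $0\le g\le(1-\delta)^{-1}\nu$ and $\|f-g\|\le\eta$.
   Context: For functions on $X$: $\langle f,g\rangle=\frac1{|X|}\sum_xf(x)g(x)$, $\|f\|_1=\frac1{|X|}\sum_x|f(x)|$; inequalities between functions are pointwise. The dual norm is $\|\phi\|^*=\max\{\langle f,\phi\rangle:\|f\|\le1\}$. An algebra norm is a norm $N$ with $N(fg)\le N(f)N(g)$ (pointwise product) and $N(\mathbf 1)=1$. For a real polynomial $P(x)=\sum_ka_kx^k$, $R_P(x)=\sum_k|a_k|x^k$; for continuous $J$ and $C,\delta>0$, $\rho(C,\delta,J)$ is twice the infimum of $R_P(C)$ over all real polynomials $P$ with $|P(x)-J(x)|\le\delta$ for all $x\in[-C,C]$. *)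

theory Defs
  imports "HOL-Analysis.Analysis" "HOL-Computational_Algebra.Polynomial"
begin

definition ip :: "('a::finite \<Rightarrow> real) \<Rightarrow> ('a \<Rightarrow> real) \<Rightarrow> real" where
  "ip f g = (1 / real CARD('a)) * (\<Sum>x\<in>UNIV. f x * g x)"

definition L1norm :: "('a::finite \<Rightarrow> real) \<Rightarrow> real" where
  "L1norm f = (1 / real CARD('a)) * (\<Sum>x\<in>UNIV. \<bar>f x\<bar>)"

definition is_norm :: "(('a::finite \<Rightarrow> real) \<Rightarrow> real) \<Rightarrow> bool" where
  "is_norm N \<longleftrightarrow>
     (\<forall>f. 0 \<le> N f) \<and> (\<forall>f. N f = 0 \<longleftrightarrow> f = (\<lambda>_. 0)) \<and>
     (\<forall>c f. N (\<lambda>x. c * f x) = \<bar>c\<bar> * N f) \<and>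
     (\<forall>f g. N (\<lambda>x. f x + g x) \<le> N f + N g)"

definition dual_norm :: "(('a::finite \<Rightarrow> real) \<Rightarrow> real) \<Rightarrow> ('a \<Rightarrow> real) \<Rightarrow> real" where
  "dual_norm N \<phi> = Sup {ip f \<phi> | f. N f \<le> 1}"

definition is_algebra_norm :: "(('a::finite \<Rightarrow> real) \<Rightarrow> real) \<Rightarrow> bool" where
  "is_algebra_norm N \<longleftrightarrow> is_norm N \<and>
     (\<forall>f g. N (\<lambda>x. f x * g x) \<le> N f * N g) \<and> N (\<lambda>_. 1) = 1"

definition R_poly :: "real poly \<Rightarrow> real \<Rightarrow> real" where
  "R_poly P x = (\<Sum>k\<le>degree P. \<bar>coeff P k\<bar> * x ^ k)"

definition rho :: "real \<Rightarrow> real \<Rightarrow> (real \<Rightarrow> real) \<Rightarrow> real" where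
  "rho C \<delta> J = 2 * Inf {R_poly P C | P. \<forall>x\<in>{-C..C}. \<bar>poly P x - J x\<bar> \<le> \<delta>}"

end

theory Submission
  imports Defs
begin

lemma normD:
  assumes "is_norm N"
  shows "N (\<lambda>_. 0) = 0" "\<And>f. 0 \<le> N f" "\<And>f. N f = 0 \<longleftrightarrow> f = (\<lambda>_. 0)"
    "\<And>c f. N (\<lambda>x. c * f x) = \<bar>c\<bar> * N f"
    "\<And>f g. N (\<lambda>x. f x + g x) \<le> N f + N g"
  using assms unfolding is_norm_def by auto

lemma norm_neg: assumes "is_norm N" shows "N (\<lambda>x. - f x) = N f"
  using normD(4)[OF assms, of "-1" f] by simp

lemma norm_sum:
  assumes "is_norm N" "finite A"
  shows "N (\<lambda>x. \<Sum>i\<in>A. F i x) \<le> (\<Sum>i\<in>A. N (F i))"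
  using assms(2)
proof (induction A rule: finite_induct)
  case empty then show ?case using normD(1)[OF assms(1)] by simp
next
  case (insert a A)
  have "N (\<lambda>x. \<Sum>i\<in>insert a A. F i x) = N (\<lambda>x. F a x + (\<Sum>i\<in>A. F i x))"
    using insert by simp
  also have "\<dots> \<le> N (F a) + N (\<lambda>x. \<Sum>i\<in>A. F i x)"
    using normD(5)[OF assms(1), of "F a" "\<lambda>x. \<Sum>i\<in>A. F i x"] by simp
  also have "\<dots> \<le> N (F a) + (\<Sum>i\<in>A. N (F i))" using insert by simp
  finally show ?case using insert by simp
qed

definition ee :: "'a \<Rightarrow> 'a \<Rightarrow> real" where "ee a = (\<lambda>x. if x = a then 1 else 0)"

lemma fun_expand: "f = (\<lambda>x. \<Sum>a\<in>(UNIV::'a::finite set). f a * ee a x)"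
  by (auto simp: ee_def fun_eq_iff if_distrib cong: if_cong)

lemma norm_upper:
  fixes N :: "('a::finite \<Rightarrow> real) \<Rightarrow> real"
  assumes "is_norm N"
  shows "N f \<le> (\<Sum>a\<in>UNIV. \<bar>f a\<bar> * N (ee a))"
proof -
  have "N f = N (\<lambda>x. \<Sum>a\<in>(UNIV::'a set). f a * ee a x)" by (subst fun_expand) simp
  also have "\<dots> \<le> (\<Sum>a\<in>UNIV. N (\<lambda>x. f a * ee a x))" by (rule norm_sum[OF assms]) simp
  also have "\<dots> = (\<Sum>a\<in>UNIV. \<bar>f a\<bar> * N (ee a))"
    using normD(4)[OF assms] by simp
  finally show ?thesis .
qed

lemma norm_convex:
  fixes N :: "('a::finite \<Rightarrow> real) \<Rightarrow> real"
  assumes "is_norm N"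
  shows "convex_on UNIV (\<lambda>v::real^'a. N (vec_nth v))"
  unfolding convex_on_def
proof (intro conjI ballI allI impI)
  fix x y :: "real^'a" and u v :: real
  assume uv: "0 \<le> u" "0 \<le> v" "u + v = 1"
  have "N (vec_nth (u *\<^sub>R x + v *\<^sub>R y)) = N (\<lambda>i. u * x$i + v * y$i)"
    by (rule arg_cong[of _ _ N]) (simp add: fun_eq_iff)
  also have "\<dots> \<le> N (\<lambda>i. u * x$i) + N (\<lambda>i. v * y$i)" by (rule normD(5)[OF assms])
  also have "\<dots> = u * N (vec_nth x) + v * N (vec_nth y)"
    using normD(4)[OF assms, of u "vec_nth x"] normD(4)[OF assms, of v "vec_nth y"] uv by simp
  finally show "N (vec_nth (u *\<^sub>R x + v *\<^sub>R y)) \<le> u * N (vec_nth x) + v * N (vec_nth y)" .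
qed simp

lemma norm_lower:
  fixes N :: "('a::finite \<Rightarrow> real) \<Rightarrow> real"
  assumes "is_norm N"
  shows "\<exists>c>0. \<forall>f x. \<bar>f x\<bar> \<le> c * N f"
proof -
  let ?M = "\<lambda>v::real^'a. N (vec_nth v)"
  have cont: "continuous_on UNIV ?M"
    by (rule convex_on_continuous[OF _ norm_convex[OF assms]]) simp
  have ne: "sphere (0::real^'a) 1 \<noteq> {}"
    by (simp add: sphere_eq_empty)
  obtain v0 where v0: "v0 \<in> sphere 0 1" "\<And>y. y \<in> sphere 0 1 \<Longrightarrow> ?M v0 \<le> ?M y"
    using continuous_attains_inf[OF compact_sphere ne continuous_on_subset[OF cont]] by blast
  have "v0 \<noteq> 0" using v0(1) by auto
  then have "vec_nth v0 \<noteq> (\<lambda>_. 0)" by (metis vec_lambda_eta zero_vec_def)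
  then have m: "?M v0 > 0" using normD(2,3)[OF assms] by (metis less_eq_real_def)
  show ?thesis
  proof (intro exI[of _ "1 / ?M v0"] conjI allI)
    show "0 < 1 / ?M v0" using m by simp
    fix f :: "'a \<Rightarrow> real" and x
    define v where "v = vec_lambda f"
    show "\<bar>f x\<bar> \<le> 1 / ?M v0 * N f"
    proof (cases "v = 0")
      case True
      then have "f = (\<lambda>_. 0)" unfolding v_def by (metis vec_lambda_inverse UNIV_I zero_vec_def)
      then show ?thesis using normD(1)[OF assms] by simp
    next
      case False
      then have nv: "norm v > 0" by simp
      have "(1 / norm v) *\<^sub>R v \<in> sphere 0 1" using nv by simp
      then have "?M v0 \<le> ?M ((1 / norm v) *\<^sub>R v)" by (rule v0(2))
      also have "\<dots> = N (\<lambda>i. (1 / norm v) * f i)"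
        by (rule arg_cong[of _ _ N]) (simp add: fun_eq_iff v_def)
      also have "\<dots> = N f / norm v" using normD(4)[OF assms, of "1 / norm v" f] nv by simp
      finally have "norm v \<le> N f / ?M v0" using nv m by (simp add: field_simps)
      moreover have "\<bar>f x\<bar> \<le> norm v" using component_le_norm_cart[of v x] by (simp add: v_def)
      ultimately show ?thesis by simp
    qed
  qed
qed

lemma dual_bdd:
  fixes N :: "('a::finite \<Rightarrow> real) \<Rightarrow> real"
  assumes "is_norm N"
  shows "bdd_above {ip f \<phi> | f. N f \<le> 1}"
proof -
  obtain c where c: "c > 0" "\<And>f x. \<bar>f x\<bar> \<le> c * N f" using norm_lower[OF assms] by blast
  show ?thesis
  proof (rule bdd_aboveI[of _ "(1 / real CARD('a)) * (\<Sum>x\<in>UNIV. c * \<bar>\<phi> x\<bar>)"], clarify)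
    fix f :: "'a \<Rightarrow> real" assume Nf: "N f \<le> 1"
    have "(\<Sum>x\<in>UNIV. f x * \<phi> x) \<le> (\<Sum>x\<in>UNIV. c * \<bar>\<phi> x\<bar>)"
    proof (rule sum_mono)
      fix x
      have "\<bar>f x\<bar> \<le> c" using c(2)[of f x] mult_left_mono[OF Nf, of c] c(1) by linarith
      then have "f x * \<phi> x \<le> \<bar>f x\<bar> * \<bar>\<phi> x\<bar>" by (simp add: abs_mult[symmetric])
      also have "\<dots> \<le> c * \<bar>\<phi> x\<bar>" using \<open>\<bar>f x\<bar> \<le> c\<close> by (simp add: mult_right_mono)
      finally show "f x * \<phi> x \<le> c * \<bar>\<phi> x\<bar>" .
    qed
    then show "ip f \<phi> \<le> (1 / real CARD('a)) * (\<Sum>x\<in>UNIV. c * \<bar>\<phi> x\<bar>)"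
      unfolding ip_def by (simp add: divide_right_mono)
  qed
qed

lemma dual_upper:
  fixes N :: "('a::finite \<Rightarrow> real) \<Rightarrow> real"
  assumes "is_norm N" "N f \<le> 1"
  shows "ip f \<phi> \<le> dual_norm N \<phi>"
  unfolding dual_norm_def using assms(2) by (intro cSup_upper[OF _ dual_bdd[OF assms(1)]]) auto

lemma ip_zero: "ip (\<lambda>_. 0) \<phi> = 0" by (simp add: ip_def)

lemma dual_nonneg:
  fixes N :: "('a::finite \<Rightarrow> real) \<Rightarrow> real"
  assumes "is_norm N"
  shows "0 \<le> dual_norm N \<phi>"
  using dual_upper[OF assms, of "\<lambda>_. 0" \<phi>] normD(1)[OF assms] by (simp add: ip_zero)

lemma ip_scale: "ip (\<lambda>x. c * f x) \<phi> = c * ip f \<phi>"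
  by (simp add: ip_def sum_distrib_left mult.assoc)

lemma ip_le:
  fixes N :: "('a::finite \<Rightarrow> real) \<Rightarrow> real"
  assumes "is_norm N"
  shows "ip f \<phi> \<le> N f * dual_norm N \<phi>"
proof (cases "N f = 0")
  case True
  then have "f = (\<lambda>_. 0)" using normD(3)[OF assms] by simp
  then show ?thesis using True by (simp add: ip_zero)
next
  case False
  then have pos: "N f > 0" using normD(2)[OF assms, of f] by simp
  have "N (\<lambda>x. (1 / N f) * f x) = 1" using normD(4)[OF assms, of "1 / N f" f] pos by simp
  then have "ip (\<lambda>x. (1 / N f) * f x) \<phi> \<le> dual_norm N \<phi>" by (intro dual_upper[OF assms]) simp
  then have "(1 / N f) * ip f \<phi> \<le> dual_norm N \<phi>" by (simp only: ip_scale)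
  then have "ip f \<phi> / N f \<le> dual_norm N \<phi>" by simp
  then show ?thesis using pos by (simp add: field_simps)
qed

lemma dual_approx:
  fixes N :: "('a::finite \<Rightarrow> real) \<Rightarrow> real"
  assumes "is_norm N" "e > 0"
  shows "\<exists>h. N h \<le> 1 \<and> dual_norm N \<phi> - e < ip h \<phi>"
proof -
  have ne: "{ip f \<phi> | f. N f \<le> 1} \<noteq> {}" using normD(1)[OF assms(1)] by (smt (verit) empty_iff mem_Collect_eq)
  have "dual_norm N \<phi> - e < Sup {ip f \<phi> | f. N f \<le> 1}" using assms(2) by (simp add: dual_norm_def)
  from less_cSupD[OF ne this] show ?thesis by blast
qed

lemma dual_pow:
  fixes N :: "('a::finite \<Rightarrow> real) \<Rightarrow> real"
  assumes "is_algebra_norm (dual_norm N)"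
  shows "dual_norm N (\<lambda>x. \<phi> x ^ k) \<le> dual_norm N \<phi> ^ k"
proof (induction k)
  case 0 then show ?case using assms unfolding is_algebra_norm_def by simp
next
  case (Suc k)
  have nn: "0 \<le> dual_norm N \<phi>" using assms unfolding is_algebra_norm_def is_norm_def by blast
  have "dual_norm N (\<lambda>x. \<phi> x ^ Suc k) = dual_norm N (\<lambda>x. \<phi> x * \<phi> x ^ k)" by simp
  also have "\<dots> \<le> dual_norm N \<phi> * dual_norm N (\<lambda>x. \<phi> x ^ k)"
    using assms unfolding is_algebra_norm_def by (rule conjE) (erule conjE, erule allE, erule allE, assumption)
  also have "\<dots> \<le> dual_norm N \<phi> * dual_norm N \<phi> ^ k" using Suc nn by (simp add: mult_left_mono)
  finally show ?case by simp
qed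

lemma sup_le_dual:
  fixes N :: "('a::finite \<Rightarrow> real) \<Rightarrow> real"
  assumes N: "is_norm N" and A: "is_algebra_norm (dual_norm N)"
  shows "\<bar>\<phi> x\<bar> \<le> dual_norm N \<phi>"
proof (rule ccontr)
  assume "\<not> ?thesis"
  then have lt: "dual_norm N \<phi> < \<bar>\<phi> x\<bar>" by simp
  let ?D = "dual_norm N \<phi>"
  let ?n = "real CARD('a)"
  have nn: "0 \<le> ?D" by (rule dual_nonneg[OF N])
  have bound: "\<bar>\<phi> x\<bar> ^ k \<le> ?n * N (ee x) * ?D ^ k" for k
  proof -
    define s where "s = sgn (\<phi> x ^ k)"
    have "ip (\<lambda>y. s * ee x y) (\<lambda>y. \<phi> y ^ k) = s * (\<phi> x ^ k) / ?n"
      proof -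
      have "(\<Sum>y\<in>UNIV. s * ee x y * \<phi> y ^ k) = (\<Sum>y\<in>UNIV. if y = x then s * \<phi> x ^ k else 0)"
        by (rule sum.cong) (auto simp: ee_def)
      then show ?thesis by (simp add: ip_def)
    qed
    also have "s * (\<phi> x ^ k) = \<bar>\<phi> x\<bar> ^ k" by (simp add: s_def power_abs sgn_mult_abs abs_sgn power_mult_distrib mult.commute)
    finally have e1: "ip (\<lambda>y. s * ee x y) (\<lambda>y. \<phi> y ^ k) = \<bar>\<phi> x\<bar> ^ k / ?n" .
    have "N (\<lambda>y. s * ee x y) = \<bar>s\<bar> * N (ee x)" using normD(4)[OF N] by simp
    also have "\<dots> \<le> N (ee x)" using normD(2)[OF N, of "ee x"]
      by (simp add: s_def abs_sgn mult_left_le_one_le sgn_if)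
    finally have e2: "N (\<lambda>y. s * ee x y) \<le> N (ee x)" .
    have "\<bar>\<phi> x\<bar> ^ k / ?n \<le> N (\<lambda>y. s * ee x y) * dual_norm N (\<lambda>y. \<phi> y ^ k)"
      using ip_le[OF N] e1 by metis
    also have "\<dots> \<le> N (ee x) * ?D ^ k"
      using e2 dual_pow[OF A, of \<phi> k] dual_nonneg[OF N] normD(2)[OF N] by (meson mult_mono order_trans)
    finally show ?thesis by (simp add: field_simps)
  qed
  show False
  proof (cases "?D = 0")
    case True
    then have "\<phi> = (\<lambda>_. 0)" using A unfolding is_algebra_norm_def is_norm_def by blast
    then show False using lt True by simp
  next
    case False
    then have Dp: "?D > 0" using nn by simp
    have r: "1 < \<bar>\<phi> x\<bar> / ?D" using lt Dp by simp
    obtain k where k: "?n * N (ee x) < (\<bar>\<phi> x\<bar> / ?D) ^ k" using real_arch_pow[OF r] by blast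
    have "(\<bar>\<phi> x\<bar> / ?D) ^ k = \<bar>\<phi> x\<bar> ^ k / ?D ^ k" by (simp add: power_divide)
    also have "\<dots> \<le> ?n * N (ee x)" using bound[of k] Dp by (simp add: divide_le_eq)
    finally show False using k by simp
  qed
qed

lemma dual_poly:
  fixes N :: "('a::finite \<Rightarrow> real) \<Rightarrow> real"
  assumes A: "is_algebra_norm (dual_norm N)"
  shows "dual_norm N (\<lambda>x. poly P (\<phi> x)) \<le> R_poly P (dual_norm N \<phi>)"
proof -
  have DN: "is_norm (dual_norm N)" using A unfolding is_algebra_norm_def by blast
  have "dual_norm N (\<lambda>x. poly P (\<phi> x)) = dual_norm N (\<lambda>x. \<Sum>i\<le>degree P. coeff P i * \<phi> x ^ i)"
    by (simp add: poly_altdef)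
  also have "\<dots> \<le> (\<Sum>i\<le>degree P. dual_norm N (\<lambda>x. coeff P i * \<phi> x ^ i))"
    by (rule norm_sum[OF DN]) simp
  also have "\<dots> = (\<Sum>i\<le>degree P. \<bar>coeff P i\<bar> * dual_norm N (\<lambda>x. \<phi> x ^ i))"
    using normD(4)[OF DN] by simp
  also have "\<dots> \<le> (\<Sum>i\<le>degree P. \<bar>coeff P i\<bar> * dual_norm N \<phi> ^ i)"
    by (intro sum_mono mult_left_mono dual_pow[OF A]) simp
  finally show ?thesis by (simp add: R_poly_def)
qed

lemma R_poly_mono:
  assumes "0 \<le> a" "a \<le> b"
  shows "R_poly P a \<le> R_poly P b"
  unfolding R_poly_def using assms by (intro sum_mono mult_left_mono power_mono) auto

lemma R_poly_nonneg: "0 \<le> b \<Longrightarrow> 0 \<le> R_poly P b"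
  unfolding R_poly_def by (intro sum_nonneg mult_nonneg_nonneg) auto

lemma weier:
  fixes C d :: real and J :: "real \<Rightarrow> real"
  assumes "d > 0" "continuous_on {-C..C} J"
  shows "\<exists>P. \<forall>x\<in>{-C..C}. \<bar>poly P x - J x\<bar> \<le> d"
proof -
  obtain g where g: "real_polynomial_function g" "\<And>x. x \<in> {-C..C} \<Longrightarrow> \<bar>J x - g x\<bar> < d"
    using Stone_Weierstrass_real_polynomial_function[OF compact_Icc assms(2) assms(1)] by blast
  obtain a n where an: "g = (\<lambda>x. \<Sum>i\<le>n. a i * x^i)" using real_polynomial_function_imp_sum[OF g(1)] by blast
  define P where "P = (\<Sum>i\<le>n. monom (a i) i)"
  have "poly P x = g x" for x by (simp add: P_def an poly_sum poly_monom)
  then show ?thesis using g(2) by (intro exI[of _ P]) (auto simp: abs_minus_commute less_imp_le)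
qed

lemma sep_step:
  fixes N :: "('a::finite \<Rightarrow> real) \<Rightarrow> real" and \<nu> f :: "'a \<Rightarrow> real"
  assumes N: "is_norm N" and nu_nonneg: "\<forall>x. 0 \<le> \<nu> x" and eta: "\<eta> > 0" and dl: "\<delta> < 1"
    and nog: "\<not> (\<exists>g :: 'a \<Rightarrow> real. (\<forall>x. 0 \<le> g x \<and> g x \<le> \<nu> x / (1 - \<delta>)) \<and> N (\<lambda>x. f x - g x) \<le> \<eta>)"
  shows "\<exists>\<psi> \<beta>. \<beta> > 0 \<and> (\<Sum>x\<in>UNIV. f x * \<psi> x) > \<beta> \<and>
     (\<forall>g h. (\<forall>x. 0 \<le> g x \<and> g x \<le> \<nu> x / (1 - \<delta>)) \<longrightarrow> N h \<le> \<eta> \<longrightarrow>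
        (\<Sum>x\<in>UNIV. (g x + h x) * \<psi> x) < \<beta>)"
proof -
  define Kv where "Kv = cbox (0::real^'a) (\<chi> i. \<nu> i / (1 - \<delta>))"
  define Bv where "Bv = {v::real^'a. N (vec_nth v) \<le> \<eta>}"
  define T where "T = (\<Union>a\<in>Kv. \<Union>b\<in>Bv. {a + b})"
  have cont: "continuous_on UNIV (\<lambda>v::real^'a. N (vec_nth v))"
    by (rule convex_on_continuous[OF _ norm_convex[OF N]]) simp
  have "closed Bv" unfolding Bv_def by (rule closed_Collect_le[OF cont]) simp
  moreover have "compact Kv" unfolding Kv_def by simp
  ultimately have clT: "closed T" unfolding T_def by (rule compact_closed_sums[rotated])
  have "convex Bv" unfolding Bv_def convex_def
  proof (clarify)
    fix x y :: "real^'a" and u v :: real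
    assume h: "N (vec_nth x) \<le> \<eta>" "N (vec_nth y) \<le> \<eta>" "0 \<le> u" "0 \<le> v" "u + v = 1"
    have "N (vec_nth (u *\<^sub>R x + v *\<^sub>R y)) \<le> u * N (vec_nth x) + v * N (vec_nth y)"
      using norm_convex[OF N] h(3-5) unfolding convex_on_def by blast
    also have "\<dots> \<le> u * \<eta> + v * \<eta>" using h by (intro add_mono mult_left_mono) auto
    finally show "N (vec_nth (u *\<^sub>R x + v *\<^sub>R y)) \<le> \<eta>" using h(5) by (metis distrib_right mult_1)
  qed
  then have cvT: "convex T" unfolding T_def Kv_def by (intro convex_sums) auto
  have zT: "vec_lambda f \<notin> T"
  proof
    assume "vec_lambda f \<in> T"
    then obtain a b where ab: "a \<in> Kv" "b \<in> Bv" "vec_lambda f = a + b" unfolding T_def by blast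
    have "(\<forall>x. 0 \<le> a$x \<and> a$x \<le> \<nu> x / (1 - \<delta>)) \<and> N (\<lambda>x. f x - a$x) \<le> \<eta>"
    proof
      show "\<forall>x. 0 \<le> a$x \<and> a$x \<le> \<nu> x / (1 - \<delta>)" using ab(1) by (simp add: Kv_def mem_box_cart)
      have "(\<lambda>x. f x - a$x) = vec_nth b"
        using arg_cong[OF ab(3), of vec_nth] by (auto simp: fun_eq_iff)
      then show "N (\<lambda>x. f x - a$x) \<le> \<eta>" using ab(2) by (simp add: Bv_def)
    qed
    then show False using nog by blast
  qed
  obtain a b where ab: "inner a (vec_lambda f) < b" "\<forall>x\<in>T. b < inner a x"
    using separating_hyperplane_closed_point[OF cvT clT zT] by blast
  define \<psi> where "\<psi> = (\<lambda>i. - (a $ i))"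
  have "0 \<in> Kv" using nu_nonneg dl unfolding Kv_def by (simp add: mem_box_cart)
  moreover have "0 \<in> Bv" unfolding Bv_def using normD(1)[OF N] eta
    by (simp add: zero_vec_def vec_lambda_inverse)
  ultimately have "(0::real^'a) \<in> T" unfolding T_def by force
  then have b0: "b < 0" using ab(2) by fastforce
  show ?thesis
  proof (intro exI[of _ \<psi>] exI[of _ "-b"] conjI allI impI)
    show "0 < - b" using b0 by simp
    show "- b < (\<Sum>x\<in>UNIV. f x * \<psi> x)" using ab(1)
      by (simp add: \<psi>_def inner_vec_def sum_negf mult.commute)
    fix g h :: "'a \<Rightarrow> real"
    assume g: "\<forall>x. 0 \<le> g x \<and> g x \<le> \<nu> x / (1 - \<delta>)" and h: "N h \<le> \<eta>"
    have "vec_lambda g \<in> Kv" using g by (simp add: Kv_def mem_box_cart)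
    moreover have "vec_lambda h \<in> Bv" using h by (simp add: Bv_def vec_lambda_inverse)
    ultimately have "vec_lambda g + vec_lambda h \<in> T" unfolding T_def by blast
    then have "b < inner a (vec_lambda g + vec_lambda h)" using ab(2) by blast
    then show "(\<Sum>x\<in>UNIV. (g x + h x) * \<psi> x) < - b"
      by (simp add: \<psi>_def inner_vec_def sum_negf mult.commute)
  qed
qed

theorem theorem4p4:
  fixes \<mu> \<nu> f :: "'a::finite \<Rightarrow> real"
    and N :: "('a \<Rightarrow> real) \<Rightarrow> real"
    and \<eta> \<delta> :: real
  assumes mu_nonneg: "\<forall>x. 0 \<le> \<mu> x" and nu_nonneg: "\<forall>x. 0 \<le> \<nu> x"
    and mu_L1: "L1norm \<mu> \<le> 1" and nu_L1: "L1norm \<nu> \<le> 1"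
    and eta_pos: "\<eta> > 0" and delta_pos: "\<delta> > 0" and delta_lt1: "\<delta> < 1"
    and N_norm: "is_norm N"
    and dual_alg: "is_algebra_norm (dual_norm N)"
    and close: "2 * rho (1 / \<eta>) (\<delta> / 4) (\<lambda>x. (x + \<bar>x\<bar>) / 2) * N (\<lambda>x. \<mu> x - \<nu> x) \<le> \<delta>"
    and f_bounds: "\<forall>x. 0 \<le> f x \<and> f x \<le> \<mu> x"
  shows "\<exists>g :: 'a \<Rightarrow> real. (\<forall>x. 0 \<le> g x \<and> g x \<le> \<nu> x / (1 - \<delta>)) \<and>
           N (\<lambda>x. f x - g x) \<le> \<eta>"
proof (rule ccontr)
  assume nog: "\<not> ?thesis"
  obtain \<psi> \<beta> where sep: "\<beta> > 0" "(\<Sum>x\<in>UNIV. f x * \<psi> x) > \<beta>"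
    "\<And>g h. (\<forall>x. 0 \<le> g x \<and> g x \<le> \<nu> x / (1 - \<delta>)) \<Longrightarrow> N h \<le> \<eta> \<Longrightarrow>
        (\<Sum>x\<in>UNIV. (g x + h x) * \<psi> x) < \<beta>"
    using sep_step[OF N_norm nu_nonneg eta_pos delta_lt1 nog] by blast
  define n where "n = real CARD('a)"
  have npos: "n > 0" unfolding n_def by simp
  define D where "D = dual_norm N"
  have DN: "is_norm D" using dual_alg unfolding D_def is_algebra_norm_def by blast
  define Jf :: "real \<Rightarrow> real" where "Jf = (\<lambda>y. (y + \<bar>y\<bar>) / 2)"
  have Jf_nn: "0 \<le> Jf y" for y unfolding Jf_def by simp
  have Jf_ge: "y \<le> Jf y" for y unfolding Jf_def by simp
  have Jf_scale: "0 \<le> c \<Longrightarrow> Jf (c * y) = c * Jf y" for c y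
    unfolding Jf_def by (simp add: abs_mult field_simps)
  define g0 where "g0 = (\<lambda>x. if \<psi> x > 0 then \<nu> x / (1 - \<delta>) else 0)"
  have g0K: "\<forall>x. 0 \<le> g0 x \<and> g0 x \<le> \<nu> x / (1 - \<delta>)"
    using nu_nonneg delta_lt1 unfolding g0_def by auto
  have g0psi: "g0 x * \<psi> x = \<nu> x * Jf (\<psi> x) / (1 - \<delta>)" for x
    unfolding g0_def Jf_def using delta_lt1 by (auto simp: field_simps)
  define SJ where "SJ = (\<lambda>m::'a\<Rightarrow>real. \<Sum>x\<in>UNIV. m x * Jf (\<psi> x))"
  have sumg0: "(\<Sum>x\<in>UNIV. g0 x * \<psi> x) = SJ \<nu> / (1 - \<delta>)"
    unfolding SJ_def g0psi by (simp add: sum_divide_distrib)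
  have SJnu_nn: "0 \<le> SJ \<nu>" unfolding SJ_def using nu_nonneg Jf_nn by (intro sum_nonneg) auto
  have key: "SJ \<nu> / (1 - \<delta>) + \<eta> * n * D \<psi> \<le> \<beta>"
  proof (rule field_le_epsilon)
    fix e :: real assume e: "e > 0"
    obtain h where h: "N h \<le> 1" "D \<psi> - e / (\<eta> * n) < ip h \<psi>"
      using dual_approx[OF N_norm, of "e / (\<eta> * n)" \<psi>] e eta_pos npos unfolding D_def by auto
    have Nh: "N (\<lambda>x. \<eta> * h x) \<le> \<eta>" using normD(4)[OF N_norm, of \<eta> h] h(1) eta_pos
      by (simp add: mult_left_le)
    have "(\<Sum>x\<in>UNIV. (g0 x + \<eta> * h x) * \<psi> x) < \<beta>" by (rule sep(3)[OF g0K Nh])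
    moreover have "(\<Sum>x\<in>UNIV. (g0 x + \<eta> * h x) * \<psi> x) = SJ \<nu> / (1 - \<delta>) + \<eta> * n * ip h \<psi>"
      using npos unfolding sumg0[symmetric] ip_def n_def
      by (simp add: distrib_right sum.distrib sum_distrib_left mult.assoc)
    moreover have "\<eta> * n * (D \<psi> - e / (\<eta> * n)) < \<eta> * n * ip h \<psi>"
      using h(2) eta_pos npos by simp
    ultimately show "SJ \<nu> / (1 - \<delta>) + \<eta> * n * D \<psi> \<le> \<beta> + e"
      using eta_pos npos by (simp add: right_diff_distrib)
  qed
  have SJmu: "SJ \<mu> > \<beta>"
  proof -
    have "(\<Sum>x\<in>UNIV. f x * \<psi> x) \<le> SJ \<mu>" unfolding SJ_def
    proof (rule sum_mono)
      fix x
      have "f x * \<psi> x \<le> f x * Jf (\<psi> x)" using f_bounds Jf_ge by (simp add: mult_left_mono)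
      also have "\<dots> \<le> \<mu> x * Jf (\<psi> x)" using f_bounds Jf_nn by (simp add: mult_right_mono)
      finally show "f x * \<psi> x \<le> \<mu> x * Jf (\<psi> x)" .
    qed
    then show ?thesis using sep(2) by simp
  qed
  define \<phi> where "\<phi> = (\<lambda>x. (n / \<beta>) * \<psi> x)"
  have Dphi: "D \<phi> = (n / \<beta>) * D \<psi>" unfolding \<phi>_def using normD(4)[OF DN, of "n / \<beta>" \<psi>] npos sep(1) by simp
  have Dpsi_le: "\<eta> * n * D \<psi> \<le> \<beta>" using key SJnu_nn delta_lt1 by (smt (verit) divide_nonneg_pos)
  have Dphi_le: "D \<phi> \<le> 1 / \<eta>"
    using Dpsi_le eta_pos npos sep(1) unfolding Dphi by (simp add: field_simps)
  have ipJ: "ip m (\<lambda>x. Jf (\<phi> x)) = SJ m / \<beta>" for m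
  proof -
    have "m x * Jf (\<phi> x) = (n / \<beta>) * (m x * Jf (\<psi> x))" for x
      unfolding \<phi>_def using Jf_scale[of "n / \<beta>" "\<psi> x"] npos sep(1) by simp
    then have "ip m (\<lambda>x. Jf (\<phi> x)) = (1 / n) * ((n / \<beta>) * SJ m)"
      unfolding ip_def SJ_def n_def by (simp add: sum_distrib_left)
    then show ?thesis using npos by simp
  qed
  have ipnu: "ip \<nu> (\<lambda>x. Jf (\<phi> x)) \<le> 1 - \<delta>"
  proof -
    have "SJ \<nu> / (1 - \<delta>) \<le> \<beta>" using key eta_pos npos dual_nonneg[OF N_norm, of \<psi>] unfolding D_def
      by (smt (verit) mult_nonneg_nonneg)
    then have "SJ \<nu> \<le> (1 - \<delta>) * \<beta>" using delta_lt1 by (simp add: divide_le_eq mult.commute)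
    then show ?thesis unfolding ipJ using sep(1) by (simp add: divide_le_eq)
  qed
  have ipmu: "ip \<mu> (\<lambda>x. Jf (\<phi> x)) > 1" unfolding ipJ using SJmu sep(1) by simp
  define C where "C = 1 / \<eta>"
  have Cpos: "C > 0" using eta_pos by (simp add: C_def)
  define S where "S = {R_poly P C | P. \<forall>x\<in>{-C..C}. \<bar>poly P x - Jf x\<bar> \<le> \<delta> / 4}"
  have contJ: "continuous_on {-C..C} Jf" unfolding Jf_def by (intro continuous_intros) auto
  obtain P0 where "\<forall>x\<in>{-C..C}. \<bar>poly P0 x - Jf x\<bar> \<le> \<delta> / 4"
    using weier[OF _ contJ, of "\<delta> / 4"] delta_pos by auto
  then have Sne: "S \<noteq> {}" unfolding S_def by blast
  have Sbdd: "bdd_below S" unfolding S_def using R_poly_nonneg Cpos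
    by (intro bdd_belowI[of _ 0]) (auto simp: less_imp_le)
  have rhoeq: "rho (1 / \<eta>) (\<delta> / 4) (\<lambda>x. (x + \<bar>x\<bar>) / 2) = 2 * Inf S"
    unfolding rho_def S_def C_def Jf_def by simp
  define M where "M = N (\<lambda>x. \<mu> x - \<nu> x)"
  have M0: "M \<ge> 0" unfolding M_def using normD(2)[OF N_norm] by blast
  have closeM: "4 * Inf S * M \<le> \<delta>" using close unfolding rhoeq M_def by simp
  obtain r where r: "r \<in> S" "r < Inf S + \<delta> / (4 * (M + 1))"
    using cInf_lessD[OF Sne, of "Inf S + \<delta> / (4 * (M + 1))"] delta_pos M0 by auto
  then obtain P where P: "r = R_poly P C" "\<forall>x\<in>{-C..C}. \<bar>poly P x - Jf x\<bar> \<le> \<delta> / 4"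
    unfolding S_def by blast
  have Mr: "M * r < \<delta> / 2"
  proof -
    have "M * r \<le> M * (Inf S + \<delta> / (4 * (M + 1)))" using r(2) M0 by (simp add: mult_left_mono)
    also have "\<dots> = M * Inf S + \<delta> / 4 * (M / (M + 1))" using M0 by (simp add: field_simps)
    also have "\<delta> / 4 * (M / (M + 1)) < \<delta> / 4" using M0 delta_pos by (simp add: field_simps)
    finally show ?thesis using closeM by (simp add: algebra_simps)
  qed
  have phi_in: "\<phi> x \<in> {-C..C}" for x
    using sup_le_dual[OF N_norm dual_alg, of \<phi> x] Dphi_le unfolding D_def C_def by auto
  have poly_part: "ip (\<lambda>x. \<mu> x - \<nu> x) (\<lambda>x. poly P (\<phi> x)) \<le> M * r"
  proof -
    have "ip (\<lambda>x. \<mu> x - \<nu> x) (\<lambda>x. poly P (\<phi> x)) \<le> M * D (\<lambda>x. poly P (\<phi> x))"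
      using ip_le[OF N_norm] unfolding M_def D_def by blast
    also have "\<dots> \<le> M * R_poly P (D \<phi>)"
      using dual_poly[OF dual_alg] M0 unfolding D_def by (simp add: mult_left_mono)
    also have "\<dots> \<le> M * r"
      using R_poly_mono[OF dual_nonneg[OF N_norm] Dphi_le[unfolded D_def]] M0 P(1)
      unfolding C_def D_def by (simp add: mult_left_mono)
    finally show ?thesis .
  qed
  have err_part: "ip (\<lambda>x. \<mu> x - \<nu> x) (\<lambda>x. Jf (\<phi> x)) - ip (\<lambda>x. \<mu> x - \<nu> x) (\<lambda>x. poly P (\<phi> x)) \<le> \<delta> / 2"
  proof -
    have "ip (\<lambda>x. \<mu> x - \<nu> x) (\<lambda>x. Jf (\<phi> x)) - ip (\<lambda>x. \<mu> x - \<nu> x) (\<lambda>x. poly P (\<phi> x))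
        = (1 / n) * (\<Sum>x\<in>UNIV. (\<mu> x - \<nu> x) * (Jf (\<phi> x) - poly P (\<phi> x)))"
      unfolding ip_def n_def by (simp add: sum_subtractf right_diff_distrib diff_divide_distrib)
    also have "\<dots> \<le> (1 / n) * (\<Sum>x\<in>UNIV. (\<mu> x + \<nu> x) * (\<delta> / 4))"
    proof (intro mult_left_mono sum_mono)
      fix x
      have a: "\<bar>Jf (\<phi> x) - poly P (\<phi> x)\<bar> \<le> \<delta> / 4" using P(2) phi_in[of x] by (simp add: abs_minus_commute)
      have "(\<mu> x - \<nu> x) * (Jf (\<phi> x) - poly P (\<phi> x)) \<le> \<bar>\<mu> x - \<nu> x\<bar> * \<bar>Jf (\<phi> x) - poly P (\<phi> x)\<bar>"
        by (simp add: abs_mult[symmetric])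
      also have "\<dots> \<le> (\<mu> x + \<nu> x) * (\<delta> / 4)"
        using a mu_nonneg[rule_format, of x] nu_nonneg[rule_format, of x] by (intro mult_mono) auto
      finally show "(\<mu> x - \<nu> x) * (Jf (\<phi> x) - poly P (\<phi> x)) \<le> (\<mu> x + \<nu> x) * (\<delta> / 4)" .
    qed (use npos in simp)
    also have "\<dots> = (L1norm \<mu> + L1norm \<nu>) * (\<delta> / 4)"
    proof -
      have "(\<Sum>x\<in>UNIV. (\<mu> x + \<nu> x) * (\<delta> / 4)) = ((\<Sum>x\<in>UNIV. \<mu> x) + (\<Sum>x\<in>UNIV. \<nu> x)) * (\<delta> / 4)"
        by (simp only: sum.distrib[symmetric] sum_distrib_right)
      moreover have "(\<Sum>x\<in>UNIV. \<bar>\<mu> x\<bar>) = (\<Sum>x\<in>UNIV. \<mu> x)" "(\<Sum>x\<in>UNIV. \<bar>\<nu> x\<bar>) = (\<Sum>x\<in>UNIV. \<nu> x)"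
        using mu_nonneg nu_nonneg by auto
      ultimately show ?thesis unfolding L1norm_def n_def by (simp add: algebra_simps)
    qed
    also have "\<dots> \<le> 2 * (\<delta> / 4)" using mu_L1 nu_L1 delta_pos by (intro mult_right_mono) auto
    finally show ?thesis by simp
  qed
  have "ip (\<lambda>x. \<mu> x - \<nu> x) (\<lambda>x. Jf (\<phi> x)) = ip \<mu> (\<lambda>x. Jf (\<phi> x)) - ip \<nu> (\<lambda>x. Jf (\<phi> x))"
    unfolding ip_def by (simp add: sum_subtractf left_diff_distrib diff_divide_distrib)
  then have "ip (\<lambda>x. \<mu> x - \<nu> x) (\<lambda>x. Jf (\<phi> x)) > \<delta>" using ipmu ipnu by simp
  then show False using err_part poly_part Mr by simp
qed

end
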